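(* Let $c\geq 1$ be an odd integer and let $a,b\geq 2$ be coprime integers. Let $\varphi:F(x,y)\to\mathbb{Z}_2=\{1,-1\}$ be the unique nontrivial homomorphism with $\varphi(x)^a\varphi(y)^b=1$ (namely $\varphi(x)=-1,\varphi(y)=1$ if $a$ is even and $b$ odd; $\varphi(x)=1,\varphi(y)=-1$ if $a$ is odd and $b$ even; $\varphi(x)=\varphi(y)=-1$ if $a,b$ are both odd). Then there exists a word $r\in F(x,y)$ with $\delta_x(r)=a$ and $\delta_y(r)=b$ (so that $H^2(K_r;\mathbb{Z})=0$) such that, letting $\beta:\Pi=F(x,y)/N(r)\to\mathbb{Z}_2$ be the homomorphism induced by $\varphi$, one has $H^2(K_r;{}_{\beta}\mathbb{Z})\cong\mathbb{Z}/c\mathbb{Z}$.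
   Context: $F(x,y)$ is the free group on $x,y$; for $r\in F(x,y)$, $\delta_x(r)$ and $\delta_y(r)$ are the exponent sums of $x$ and $y$ in $r$, $N(r)$ is the normal closure of $r$, and $K_r$ is the model two-complex of the presentation $\langle x,y\mid r\rangle$ (one $0$-cell, two $1$-cells, one $2$-cell attached along $r$), with fundamental group $\Pi=F(x,y)/N(r)$. Since $\varphi(r)=\varphi(x)^{\delta_x(r)}\varphi(y)^{\delta_y(r)}=1$, $\varphi$ induces $\beta$ on $\Pi$. $\mathbb{Z}_2$ is identified with $\mathrm{Aut}(\mathbb{Z})$, so $\beta$ is a local integer coefficient system on $K_r$ and $H^2(K_r;{}_{\beta}\mathbb{Z})$ is the corresponding twisted cohomology group. *)

theory Defs
  imports "HOL-Algebra.Algebra"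
begin

datatype gen = Gx | Gy

text \<open>A letter is a generator with a sign (True = g, False = g inverse);
  a word (element of F(x,y), not necessarily reduced) is a list of letters.\<close>
type_synonym letter = "gen \<times> bool"
type_synonym word = "letter list"

definition expsum :: "gen \<Rightarrow> word \<Rightarrow> int" where
  "expsum g w = (\<Sum>l\<leftarrow>w. if fst l = g then (if snd l then 1 else -1) else 0)"

definition letter_val :: "(gen \<Rightarrow> int) \<Rightarrow> letter \<Rightarrow> int" where
  "letter_val \<phi> l = (if snd l then \<phi> (fst l) else \<phi> (fst l))"

text \<open>(In Z_2 = {1,-1} every element is its own inverse, so g and g^-1 have the same value.)\<close>

fun word_val :: "(gen \<Rightarrow> int) \<Rightarrow> word \<Rightarrow> int" where
  "word_val \<phi> [] = 1"
| "word_val \<phi> (l # w) = letter_val \<phi> l * word_val \<phi> w"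

text \<open>Fox derivative d/dg of a word, pushed forward to Z via \<phi>:
  d(uv) = du + u dv, d(g) = 1, d(g^-1) = -g^-1.\<close>
fun fox_phi :: "(gen \<Rightarrow> int) \<Rightarrow> gen \<Rightarrow> word \<Rightarrow> int" where
  "fox_phi \<phi> g [] = 0"
| "fox_phi \<phi> g (l # w) =
     (if fst l = g then (if snd l then 1 else - letter_val \<phi> l) else 0)
     + letter_val \<phi> l * fox_phi \<phi> g w"

text \<open>Twisted cellular cochain complex of the model 2-complex K_r:
  C^1 = Z^{x,y}, C^2 = Z, coboundary f \<mapsto> f(x) d_x r + f(y) d_y r.
  H^2(K_r; \<beta>Z) = C^2 / image of the coboundary (there are no 3-cells).\<close>
definition coboundary_image :: "(gen \<Rightarrow> int) \<Rightarrow> word \<Rightarrow> int set" where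
  "coboundary_image \<phi> r = {u * fox_phi \<phi> Gx r + v * fox_phi \<phi> Gy r | u v. True}"

definition twisted_H2 :: "(gen \<Rightarrow> int) \<Rightarrow> word \<Rightarrow> int set monoid" where
  "twisted_H2 \<phi> r = integer_group Mod coboundary_image \<phi> r"

definition Zmod :: "int \<Rightarrow> int set monoid" where
  "Zmod c = integer_group Mod {k * c | k. True}"

end

theory Submission
  imports Defs
begin

definition pw :: "gen \<Rightarrow> int \<Rightarrow> word" where
  "pw g n = (if n \<ge> 0 then replicate (nat n) (g, True) else replicate (nat (-n)) (g, False))"

lemma expsum_Nil[simp]: "expsum g [] = 0" by (simp add: expsum_def)
lemma expsum_Cons[simp]: "expsum g (l # w) = (if fst l = g then (if snd l then 1 else -1) else 0) + expsum g w"
  by (simp add: expsum_def)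
lemma expsum_append[simp]: "expsum g (u @ w) = expsum g u + expsum g w"
  by (simp add: expsum_def)

lemma fox_append: "fox_phi \<phi> g (u @ w) = fox_phi \<phi> g u + word_val \<phi> u * fox_phi \<phi> g w"
  by (induction u) (auto simp: algebra_simps)

lemma word_val_append[simp]: "word_val \<phi> (u @ w) = word_val \<phi> u * word_val \<phi> w"
  by (induction u) auto

lemma rep_facts:
  "expsum g (replicate m (h, s)) = (if g = h then (if s then int m else - int m) else 0)"
  "word_val \<phi> (replicate m (h, s)) = \<phi> h ^ m"
  "g \<noteq> h \<Longrightarrow> fox_phi \<phi> g (replicate m (h, s)) = 0"
  "\<phi> h = 1 \<Longrightarrow> fox_phi \<phi> h (replicate m (h, s)) = (if s then int m else - int m)"
  "\<phi> h = -1 \<Longrightarrow> fox_phi \<phi> h (replicate m (h, s)) = (if even m then 0 else 1)"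
  by (induction m) (auto simp: letter_val_def)

lemma pw_expsum: "expsum g (pw h n) = (if g = h then n else 0)"
  by (auto simp: pw_def rep_facts)

lemma pw_val: "\<phi> h \<in> {1,-1} \<Longrightarrow> word_val \<phi> (pw h n) = (if even n then 1 else \<phi> h)"
  by (auto simp: pw_def rep_facts even_nat_iff)

lemma pw_fox_other: "g \<noteq> h \<Longrightarrow> fox_phi \<phi> g (pw h n) = 0"
  by (auto simp: pw_def rep_facts)

lemma pw_fox1: "\<phi> h = 1 \<Longrightarrow> fox_phi \<phi> h (pw h n) = n"
  by (auto simp: pw_def rep_facts)

lemma pw_fox2: "\<phi> h = -1 \<Longrightarrow> fox_phi \<phi> h (pw h n) = (if even n then 0 else 1)"
  by (auto simp: pw_def rep_facts even_nat_iff)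

definition xyk :: "nat \<Rightarrow> word" where
  "xyk k = concat (replicate k [(Gx,True),(Gy,True)])"

lemma xyk_facts:
  assumes "\<phi> Gx = -1" "\<phi> Gy = -1"
  shows "expsum Gx (xyk k) = int k" "expsum Gy (xyk k) = int k"
    "word_val \<phi> (xyk k) = 1" "fox_phi \<phi> Gx (xyk k) = int k" "fox_phi \<phi> Gy (xyk k) = - int k"
  using assms by (induction k) (auto simp: xyk_def fox_append letter_val_def)

lemma final:
  assumes "coboundary_image \<phi> r = {k * c | k. True}"
  shows "twisted_H2 \<phi> r \<cong> Zmod c"
  using assms by (simp add: twisted_H2_def Zmod_def)

theorem proposition6p3:
  fixes a b c :: int and \<phi> :: "gen \<Rightarrow> int"
  assumes "c \<ge> 1" and "odd c"
    and "a \<ge> 2" and "b \<ge> 2" and "coprime a b"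
    and "\<forall>g. \<phi> g \<in> {1, -1}"
    and "\<exists>g. \<phi> g \<noteq> 1"
    and "\<phi> Gx ^ nat a * \<phi> Gy ^ nat b = 1"
  shows "\<exists>r :: word. expsum Gx r = a \<and> expsum Gy r = b
           \<and> twisted_H2 \<phi> r \<cong> Zmod c"
proof -
  have px: "\<phi> Gx \<in> {1,-1}" and py: "\<phi> Gy \<in> {1,-1}" using assms(6) by auto
  have ne: "\<phi> Gx \<noteq> 1 \<or> \<phi> Gy \<noteq> 1" using assms(7) by (metis gen.exhaust)
  have nn: "\<not> (even a \<and> even b)" using assms(5)
    by (metis coprime_common_divisor dvd_refl odd_one)
  have pa: "\<phi> Gx ^ nat a = (if even a then 1 else \<phi> Gx)" using px assms(3)
    by (auto simp: even_nat_iff)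
  have pb: "\<phi> Gy ^ nat b = (if even b then 1 else \<phi> Gy)" using py assms(4)
    by (auto simp: even_nat_iff)
  consider (A) "even a" "odd b" "\<phi> Gx = -1" "\<phi> Gy = 1"
    | (B) "odd a" "even b" "\<phi> Gx = 1" "\<phi> Gy = -1"
    | (C) "odd a" "odd b" "\<phi> Gx = -1" "\<phi> Gy = -1"
  proof -
    have h8: "(if even a then 1 else \<phi> Gx) * (if even b then 1 else \<phi> Gy) = 1"
      using assms(8) unfolding pa pb .
    show ?thesis using that px py ne nn h8 by (cases "even a"; cases "even b") auto
  qed
  then show ?thesis
  proof cases
    case A
    obtain m where m: "b = 2*m+1" using A by (auto elim!: oddE)
    obtain n where n: "c = 2*n+1" using assms(2) by (auto elim!: oddE)
    define p where "p = m + n + 1"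
    define q where "q = m - n"
    have pq: "p + q = b" "p - q = c" using m n unfolding p_def q_def by simp_all
    define r where "r = pw Gy p @ pw Gx 1 @ pw Gy q @ pw Gx (a - 1)"
    have e1: "expsum Gx r = a" "expsum Gy r = b"
      using pq by (auto simp: r_def pw_expsum)
    have fx: "fox_phi \<phi> Gx r = 0"
      using A px py by (auto simp: r_def fox_append pw_fox_other pw_fox2 pw_val)
    have fy: "fox_phi \<phi> Gy r = c"
      using A px py pq by (auto simp: r_def fox_append pw_fox_other pw_fox1 pw_val)
    have "coboundary_image \<phi> r = {k * c | k. True}"
      unfolding coboundary_image_def fx fy by auto
    then show ?thesis using e1 final by blast
  next
    case B
    obtain m where m: "a = 2*m+1" using B by (auto elim!: oddE)
    obtain n where n: "c = 2*n+1" using assms(2) by (auto elim!: oddE)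
    define p where "p = m + n + 1"
    define q where "q = m - n"
    have pq: "p + q = a" "p - q = c" using m n unfolding p_def q_def by simp_all
    define r where "r = pw Gx p @ pw Gy 1 @ pw Gx q @ pw Gy (b - 1)"
    have e1: "expsum Gx r = a" "expsum Gy r = b"
      using pq by (auto simp: r_def pw_expsum)
    have fy: "fox_phi \<phi> Gy r = 0"
      using B px py by (auto simp: r_def fox_append pw_fox_other pw_fox2 pw_val)
    have fx: "fox_phi \<phi> Gx r = c"
      using B px py pq by (auto simp: r_def fox_append pw_fox_other pw_fox1 pw_val)
    have "coboundary_image \<phi> r = {k * c | k. True}"
      unfolding coboundary_image_def fx fy by auto
    then show ?thesis using e1 final by blast
  next
    case C
    define r where "r = xyk (nat c) @ pw Gx (a - c) @ pw Gy (b - c)"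
    have ev: "even (a - c)" "even (b - c)" using C assms(2) by auto
    have e1: "expsum Gx r = a" "expsum Gy r = b"
      using C assms(1) by (auto simp: r_def pw_expsum xyk_facts)
    have fx: "fox_phi \<phi> Gx r = c"
      using C assms(1) ev by (auto simp: r_def fox_append pw_fox_other pw_fox2 pw_val xyk_facts)
    have fy: "fox_phi \<phi> Gy r = - c"
      using C assms(1) ev by (auto simp: r_def fox_append pw_fox_other pw_fox2 pw_val xyk_facts)
    have "coboundary_image \<phi> r = {k * c | k. True}"
      unfolding coboundary_image_def fx fy
    proof (rule subset_antisym; rule subsetI)
      fix z assume "z \<in> {u * c + v * - c |u v. True}"
      then obtain u v where "z = u * c + v * - c" by blast
      then have "z = (u - v) * c" by (simp add: algebra_simps)
      then show "z \<in> {k * c |k. True}" by blast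
    next
      fix z assume "z \<in> {k * c |k. True}"
      then obtain k where "z = k * c" by blast
      then have "z = k * c + 0 * - c" by simp
      then show "z \<in> {u * c + v * - c |u v. True}" by blast
    qed
    then show ?thesis using e1 final by blast
  qed
qed

end
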